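(* Let $\phi_*\in(0,\pi/2)$, $R\ge r=1$, and consider the billiard map on $Q(\phi_*,R)$. For $x\in M_r$ with $n_1=0$, writing $\tau_0=|p(x_0)p(x_1)|$ and $\tau_1=|p(x_1)p(x_2)|$, one has $\tau_0+\tau_1>2d_0$, $\tau_0+\tau_1>2d_2$, and hence $\tau_0+\tau_1>d_0+d_2$.
   Context: Setting: $r=1$, $Q(\phi_*,R)=D(O_r,r)\cap D(O_R,R)$ with $|O_rO_R|=\sqrt{R^2-r^2\sin^2\phi_*}-r\cos\phi_*$; its boundary consists of $\Gamma_r$ (the major arc of $\partial D(O_r,r)$ with position angles $[\phi_*,2\pi-\phi_*]$) and $\Gamma_R\subset\partial D(O_R,R)$. Phase space $M=M_r\sqcup M_R$, coordinates $(\phi,\theta)$ with $\theta\in(0,\pi)$ the angle from the positive tangent direction; $p(x)$ the base point; $F$ the billiard map. $M_r^{out}=M_r\cap F^{-1}(M_R)$, $M_R^{out}=M_R\cap F^{-1}(M_r)$. For $x\in M_r$: $x_0=F^{n_0}x$ with $n_0=\inf\{n\ge0:F^nx\in M_r^{out}\}$, $x_1=Fx_0$, $n_1=\inf\{n\ge0:F^nx_1\in M_R^{out}\}$, $x_2=F^{n_1+1}x_1$; $d_0=r\sin\theta(x_0)$, $d_2=r\sin\theta(x_2)$. *)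

theory Defs
  imports "HOL-Analysis.Analysis"
begin

(* Plane = complex numbers.  r = 1, O_r = 0.  Parameters: phs = phi_*, R. *)

text \<open>Centre of the big disc: on the real axis at distance
  sqrt(R^2 - sin^2 phi_*) - cos phi_* from O_r = 0, on the side opposite to the
  cap, so that the two circles meet at the points cis(+-phi_*).\<close>
definition O_R :: "real \<Rightarrow> real \<Rightarrow> complex" where
  "O_R phs R = complex_of_real (- (sqrt (R\<^sup>2 - (sin phs)\<^sup>2) - cos phs))"

definition Qset :: "real \<Rightarrow> real \<Rightarrow> complex set" where
  "Qset phs R = {z. cmod z \<le> 1 \<and> cmod (z - O_R phs R) \<le> R}"

definition ang2pi :: "complex \<Rightarrow> real" where
  "ang2pi z = (if Arg z < 0 then Arg z + 2 * pi else Arg z)"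

definition Gamma_r :: "real \<Rightarrow> complex set" where
  "Gamma_r phs = {z. cmod z = 1 \<and> phs \<le> ang2pi z \<and> ang2pi z \<le> 2 * pi - phs}"

text \<open>Half opening angle of Gamma_R seen from O_R (position angle of the corner cis phi_*).\<close>
definition psistar :: "real \<Rightarrow> real \<Rightarrow> real" where
  "psistar phs R = Arg ((cis phs - O_R phs R) / complex_of_real R)"

datatype side = Sr | SR

text \<open>Phase point: (component, position angle on the respective circle, theta).
  On M_r the position angle is phi (around O_r); on M_R it is the position angle
  psi around O_R.  theta in (0,pi) is the angle from the positive (counterclockwise)
  tangent direction to the outgoing velocity.\<close>
type_synonym bstate = "side \<times> real \<times> real"

definition Mr :: "real \<Rightarrow> bstate set" where
  "Mr phs = {(s, \<phi>, \<theta>). s = Sr \<and> phs \<le> \<phi> \<and> \<phi> \<le> 2 * pi - phs \<and> 0 < \<theta> \<and> \<theta> < pi}"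

definition MR :: "real \<Rightarrow> real \<Rightarrow> bstate set" where
  "MR phs R = {(s, \<psi>, \<theta>). s = SR \<and> - psistar phs R < \<psi> \<and> \<psi> < psistar phs R \<and> 0 < \<theta> \<and> \<theta> < pi}"

definition base :: "real \<Rightarrow> real \<Rightarrow> bstate \<Rightarrow> complex" where
  "base phs R x = (case x of (Sr, \<phi>, \<theta>) \<Rightarrow> cis \<phi>
                          | (SR, \<psi>, \<theta>) \<Rightarrow> O_R phs R + complex_of_real R * cis \<psi>)"

definition vel :: "bstate \<Rightarrow> complex" where
  "vel x = \<i> * cis (fst (snd x)) * cis (snd (snd x))"

definition bmap :: "real \<Rightarrow> real \<Rightarrow> bstate \<Rightarrow> bstate" where
  "bmap phs R x =
    (let q = base phs R x; v = vel x;
         t = Sup {t. 0 \<le> t \<and> q + complex_of_real t * v \<in> Qset phs R};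
         q' = q + complex_of_real t * v
     in if q' \<in> Gamma_r phs then
          (let n = q'; v' = v - complex_of_real (2 * (v \<bullet> n)) * n
           in (Sr, ang2pi q', Arg (v' / (\<i> * n))))
        else
          (let n = (q' - O_R phs R) / complex_of_real R;
               v' = v - complex_of_real (2 * (v \<bullet> n)) * n
           in (SR, Arg n, Arg (v' / (\<i> * n)))))"

definition Mr_out :: "real \<Rightarrow> real \<Rightarrow> bstate set" where
  "Mr_out phs R = {x \<in> Mr phs. bmap phs R x \<in> MR phs R}"

definition MR_out :: "real \<Rightarrow> real \<Rightarrow> bstate set" where
  "MR_out phs R = {x \<in> MR phs R. bmap phs R x \<in> Mr phs}"

definition theta :: "bstate \<Rightarrow> real" where
  "theta x = snd (snd x)"

end

theory Submission
  imports Defs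
begin


lemma cfacts:
  assumes "0 < phs" "phs < pi/2" "1 \<le> R"
  defines "c \<equiv> sqrt (R\<^sup>2 - (sin phs)\<^sup>2) - cos phs"
  shows "O_R phs R = - complex_of_real c" "0 \<le> c" "c < R" "1 + 2*c*cos phs + c^2 = R^2"
proof -
  show "O_R phs R = - complex_of_real c" by (simp add: O_R_def c_def)
  have cp: "cos phs > 0" using assms by (intro cos_gt_zero) auto
  have sc: "(sin phs)^2 + (cos phs)^2 = 1" by simp
  have R1: "R^2 \<ge> 1" using assms(3) by (metis one_le_power)
  have ge: "R^2 - (sin phs)^2 \<ge> (cos phs)^2" using R1 sc by linarith
  have "sqrt (R\<^sup>2 - (sin phs)\<^sup>2) \<ge> sqrt ((cos phs)^2)" using ge by (rule real_sqrt_le_mono)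
  then show "0 \<le> c" using cp by (simp add: c_def)
  have "sqrt (R\<^sup>2 - (sin phs)\<^sup>2) \<le> sqrt (R^2)" by (intro real_sqrt_le_mono) simp
  then show "c < R" using cp assms by (simp add: c_def)
  have sq: "(sqrt (R\<^sup>2 - (sin phs)\<^sup>2))^2 = R\<^sup>2 - (sin phs)\<^sup>2" using ge
    by (intro real_sqrt_pow2) (smt (verit) zero_le_power2)
  show "1 + 2*c*cos phs + c^2 = R^2" unfolding c_def using sq sc by (simp add: power2_eq_square algebra_simps)
qed

lemma norm_shift_sq:
  fixes z :: complex and c :: real
  shows "(cmod (z + complex_of_real c))^2 = (cmod z)^2 + 2*c*Re z + c^2"
  unfolding cmod_power2 by (simp add: power2_eq_square algebra_simps)

lemma unit_in_big:
  assumes "0 < phs" "phs < pi/2" "1 \<le> R" "cmod z = 1"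
  shows "cmod (z - O_R phs R) \<le> R \<longleftrightarrow> (sqrt (R\<^sup>2 - (sin phs)\<^sup>2) - cos phs = 0 \<or> Re z \<le> cos phs)"
proof -
  define c where "c = sqrt (R\<^sup>2 - (sin phs)\<^sup>2) - cos phs"
  note cf = cfacts[OF assms(1-3), folded c_def]
  have e: "(cmod (z - O_R phs R))^2 = 1 + 2*c*Re z + c^2"
    using norm_shift_sq[of z c] cf(1) assms(4) by simp
  have "cmod (z - O_R phs R) \<le> R \<longleftrightarrow> (cmod (z - O_R phs R))^2 \<le> R^2"
    using assms(3) by (simp add: abs_le_square_iff[symmetric])
  also have "\<dots> \<longleftrightarrow> c * Re z \<le> c * cos phs" using e cf(4) by auto
  also have "\<dots> \<longleftrightarrow> (c = 0 \<or> Re z \<le> cos phs)" using cf(2)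
    by (metis mult_le_cancel_left_pos order_less_le mult_zero_left order_refl)
  finally show ?thesis by (simp add: c_def)
qed

lemma ang2pi_cis: assumes "0 \<le> p" "p < 2*pi" shows "ang2pi (cis p) = p"
proof (cases "p \<le> pi")
  case True
  then have "Arg (cis p) = p" using assms by (intro Arg_cis) auto
  then show ?thesis using assms by (simp add: ang2pi_def)
next
  case False
  have "cis p = cis (p - 2*pi)" by (simp add: complex_eq_iff cos_diff sin_diff)
  moreover have "Arg (cis (p - 2*pi)) = p - 2*pi" using assms False by (intro Arg_cis) auto
  ultimately show ?thesis using False assms by (simp add: ang2pi_def)
qed

lemma cis_ang2pi: assumes "cmod z = 1" shows "cis (ang2pi z) = z" "0 \<le> ang2pi z" "ang2pi z < 2*pi"
proof -
  have z0: "z \<noteq> 0" using assms by auto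
  have "cis (Arg z) = z" using cis_Arg[OF z0] assms by (simp add: sgn_div_norm)
  moreover have "cis (Arg z + 2*pi) = cis (Arg z)" by (simp add: complex_eq_iff)
  ultimately show "cis (ang2pi z) = z" by (simp add: ang2pi_def)
  show "0 \<le> ang2pi z" "ang2pi z < 2*pi" using Arg_correct[OF z0] by (auto simp: ang2pi_def)
qed

lemma cos_ang2pi: assumes "cmod z = 1" shows "Re z = cos (ang2pi z)"
  using cis_ang2pi(1)[OF assms] by (metis cis.simps(1))

lemma in_gamma:
  assumes "0 < phs" "phs < pi/2" "cmod z = 1" "Re z \<le> cos phs"
  shows "z \<in> Gamma_r phs"
proof -
  define a where "a = ang2pi z"
  have a: "0 \<le> a" "a < 2*pi" "cos a \<le> cos phs" using cis_ang2pi[OF assms(3)] cos_ang2pi[OF assms(3)] assms(4)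
    by (auto simp: a_def)
  have "phs \<le> a \<and> a \<le> 2*pi - phs"
  proof (cases "a \<le> pi")
    case True
    then have "phs \<le> a" using a assms by (subst cos_mono_le_eq[symmetric]) auto
    then show ?thesis using True assms by auto
  next
    case False
    have "cos (2*pi - a) = cos a" by (simp add: cos_diff)
    then have "phs \<le> 2*pi - a" using a assms False by (subst cos_mono_le_eq[symmetric]) auto
    then show ?thesis using False assms by auto
  qed
  then show ?thesis using assms by (simp add: Gamma_r_def a_def)
qed

lemma p0_facts:
  assumes "0 < phs" "phs < pi/2" "1 \<le> R" "phs \<le> p" "p \<le> 2*pi - phs"
  shows "cis p \<in> Gamma_r phs" "cis p \<in> Qset phs R"
proof -
  have ang: "ang2pi (cis p) = p" using assms by (intro ang2pi_cis) auto
  show "cis p \<in> Gamma_r phs" using assms ang by (simp add: Gamma_r_def)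
  have "cos p \<le> cos phs"
  proof (cases "p \<le> pi")
    case True
    then show ?thesis using assms by (subst cos_mono_le_eq) auto
  next
    case False
    have "cos (2*pi - p) = cos p" by (simp add: cos_diff)
    moreover have "cos (2*pi - p) \<le> cos phs" using assms False by (subst cos_mono_le_eq) auto
    ultimately show ?thesis by simp
  qed
  then have "cmod (cis p - O_R phs R) \<le> R" using unit_in_big[OF assms(1-3), of "cis p"] by simp
  then show "cis p \<in> Qset phs R" by (simp add: Qset_def)
qed

lemma sup_step:
  assumes "0 < phs" "phs < pi/2" "1 \<le> R" "q \<in> Qset phs R" "cmod v = 1"
  defines "S \<equiv> {t. 0 \<le> t \<and> q + complex_of_real t * v \<in> Qset phs R}"
  defines "t \<equiv> Sup S"
  shows "0 \<le> t" "q + complex_of_real t * v \<in> Qset phs R"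
    "q + complex_of_real t * v \<notin> Gamma_r phs \<Longrightarrow> cmod (q + complex_of_real t * v - O_R phs R) = R"
proof -
  have q1: "cmod q \<le> 1" using assms(4) by (simp add: Qset_def)
  have ne: "S \<noteq> {}" using assms(4) by (auto simp: S_def intro!: exI[of _ 0])
  have bdd: "bdd_above S"
  proof (rule bdd_aboveI[of _ 2])
    fix x assume "x \<in> S"
    then have x: "0 \<le> x" "cmod (q + complex_of_real x * v) \<le> 1" by (auto simp: S_def Qset_def)
    have "cmod (complex_of_real x * v) \<le> cmod (q + complex_of_real x * v) + cmod q"
      by (metis add_diff_cancel_left' norm_triangle_ineq4 add.commute)
    then show "x \<le> 2" using x q1 assms(5) by (simp add: norm_mult)
  qed
  have cl: "closed S"
  proof -
    have "S = {t. 0 \<le> t} \<inter> {t. cmod (q + complex_of_real t * v) \<le> 1} \<inter> {t. cmod (q + complex_of_real t * v - O_R phs R) \<le> R}"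
      by (auto simp: S_def Qset_def)
    moreover have "closed {t::real. 0 \<le> t}" by (rule closed_Collect_le) (auto intro!: continuous_intros)
    moreover have "closed {t. cmod (q + complex_of_real t * v) \<le> 1}" by (rule closed_Collect_le) (auto intro!: continuous_intros)
    moreover have "closed {t. cmod (q + complex_of_real t * v - O_R phs R) \<le> R}" by (rule closed_Collect_le) (auto intro!: continuous_intros)
    ultimately show ?thesis by (metis closed_Int)
  qed
  have tS: "t \<in> S" unfolding t_def using ne bdd cl by (rule closed_contains_Sup)
  then show "0 \<le> t" "q + complex_of_real t * v \<in> Qset phs R" by (auto simp: S_def)
  define z where "z = q + complex_of_real t * v"
  have zQ: "cmod z \<le> 1" "cmod (z - O_R phs R) \<le> R" using tS by (auto simp: S_def Qset_def z_def)
  assume ng: "q + complex_of_real t * v \<notin> Gamma_r phs"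
  show "cmod (q + complex_of_real t * v - O_R phs R) = R"
  proof (rule ccontr)
    assume "cmod (q + complex_of_real t * v - O_R phs R) \<noteq> R"
    then have lt: "cmod (z - O_R phs R) < R" using zQ by (simp add: z_def)
    show False
    proof (cases "cmod z = 1")
      case True
      have "sqrt (R\<^sup>2 - (sin phs)\<^sup>2) - cos phs = 0 \<or> Re z \<le> cos phs"
        using unit_in_big[OF assms(1-3) True] zQ by simp
      then show False
      proof
        assume c0: "sqrt (R\<^sup>2 - (sin phs)\<^sup>2) - cos phs = 0"
        have "1 + 2 * 0 * cos phs + 0^2 = R^2" using cfacts(4)[OF assms(1-3)] c0 by simp
        then have "R = 1" using assms(3) by (simp add: power2_eq_square) (smt (verit) mult_le_cancel_right1)
        moreover have "O_R phs R = 0" using cfacts(1)[OF assms(1-3)] c0 by simp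
        ultimately show False using lt True by simp
      next
        assume "Re z \<le> cos phs"
        then have "z \<in> Gamma_r phs" using in_gamma[OF assms(1,2) True] by simp
        then show False using ng by (simp add: z_def)
      qed
    next
      case False
      then have lt1: "cmod z < 1" using zQ by simp
      define e where "e = min (1 - cmod z) (R - cmod (z - O_R phs R)) / 2"
      have e: "0 < e" "e < 1 - cmod z" "e < R - cmod (z - O_R phs R)" using lt1 lt by (auto simp: e_def)
      have ev: "cmod (complex_of_real e * v) = e" using e assms(5) by (simp add: norm_mult)
      have "q + complex_of_real (t + e) * v = z + complex_of_real e * v" by (simp add: z_def algebra_simps)
      moreover have "cmod (z + complex_of_real e * v) \<le> 1"
        using norm_triangle_ineq[of z "complex_of_real e * v"] ev e by simp
      moreover have "cmod (z + complex_of_real e * v - O_R phs R) \<le> R"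
        using norm_triangle_ineq[of "z - O_R phs R" "complex_of_real e * v"] ev e
        by (simp add: algebra_simps)
      ultimately have "t + e \<in> S" using e \<open>0 \<le> t\<close> by (simp add: S_def Qset_def)
      then have "t + e \<le> t" unfolding t_def using bdd by (rule cSup_upper)
      then show False using e by simp
    qed
  qed
qed



lemma key:
  fixes p0 v n :: complex and t s d :: real
  assumes "cmod p0 = 1" "cmod v = 1" "p0 \<bullet> v = -d" "0 \<le> t" "0 < s" "cmod n = 1"
    "v \<bullet> n > 0" "(p0 + complex_of_real t * v) \<bullet> n > 0"
    "cmod (p0 + complex_of_real t * v + complex_of_real s * (v - complex_of_real (2*(v\<bullet>n)) * n)) = 1"
  shows "t + s > 2*d"
proof -
  define p1 where "p1 = p0 + t *\<^sub>R v"
  define w where "w = v - (2*(v\<bullet>n)) *\<^sub>R n"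
  have h: "norm (p1 + s *\<^sub>R w) = 1" using assms(9) by (simp add: p1_def w_def scaleR_conv_of_real)
  have vv: "v \<bullet> v = 1" "p0 \<bullet> p0 = 1" "n \<bullet> n = 1" using assms(1,2,6) by (simp_all add: power2_norm_eq_inner[symmetric])
  have ww: "w \<bullet> w = 1" using vv by (simp add: w_def inner_diff_left inner_diff_right inner_commute[of n v] power2_eq_square algebra_simps)
  have p1p1: "p1 \<bullet> p1 = 1 - 2*t*d + t^2" using vv assms(3)
    by (simp add: p1_def inner_add_left inner_add_right inner_commute[of v p0] power2_eq_square algebra_simps)
  have p1v: "p1 \<bullet> v = t - d" using vv assms(3) by (simp add: p1_def inner_add_left)
  have p1w: "inner p1 w = inner p1 v - 2*inner v n * inner p1 n" by (simp add: w_def inner_diff_right)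
  have "(p1 + s *\<^sub>R w) \<bullet> (p1 + s *\<^sub>R w) = 1" using h by (simp add: power2_norm_eq_inner[symmetric])
  then have "inner p1 p1 + 2 * s * inner p1 w + s^2 * inner w w = 1"
    by (simp add: inner_add_left inner_add_right inner_commute[of w p1] power2_eq_square algebra_simps)
  then have eq: "(t + s) * (t + s - 2 * d) = 4 * s * (inner v n * inner p1 n)" using p1p1 p1v p1w ww
    by (simp add: algebra_simps power2_eq_square)
  have g: "(v\<bullet>n)*(p1\<bullet>n) > 0" using assms(7,8) by (simp add: p1_def scaleR_conv_of_real)
  have "(t+s)*(t+s-2*d) > 0" using eq g assms(5) by simp
  moreover have "t + s > 0" using assms(4,5) by simp
  ultimately have "t + s - 2*d > 0" by (rule zero_less_mult_pos)
  then show ?thesis by simp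
qed



lemma arg_unit: assumes "cmod z = 1" shows "cis (Arg z) = z" "sin (Arg z) = Im z"
proof -
  have z0: "z \<noteq> 0" using assms by auto
  show c: "cis (Arg z) = z" using cis_Arg[OF z0] assms by (simp add: sgn_div_norm)
  show "sin (Arg z) = Im z" using arg_cong[OF c, of Im] by simp
qed

lemma refl_facts:
  fixes v n :: complex
  assumes "cmod n = 1" "cmod v = 1"
  defines "v' \<equiv> v - complex_of_real (2*(v \<bullet> n)) * n"
  shows "v' \<bullet> n = -(v \<bullet> n)" "cmod v' = 1"
    "- v' - complex_of_real (2*((- v') \<bullet> n)) * n = - v"
    "Im (v' / (\<i> * n)) = v \<bullet> n" "cmod (v' / (\<i> * n)) = 1"
proof -
  have nn: "n \<bullet> n = 1" "v \<bullet> v = 1" using assms(1,2) by (simp_all add: power2_norm_eq_inner[symmetric])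
  have v'e: "v' = v - (2*(v \<bullet> n)) *\<^sub>R n" by (simp add: v'_def scaleR_conv_of_real)
  show vn: "v' \<bullet> n = -(v \<bullet> n)" using nn by (simp add: v'e inner_diff_left)
  have "v' \<bullet> v' = 1" using nn by (simp add: v'e inner_diff_left inner_diff_right inner_commute[of n v] power2_eq_square algebra_simps)
  then show n1: "cmod v' = 1" by (metis norm_eq_sqrt_inner real_sqrt_one)
  have m: "(- v') \<bullet> n = v \<bullet> n" using vn by (simp add: inner_minus_left)
  show "- v' - complex_of_real (2*((- v') \<bullet> n)) * n = - v" by (simp only: m) (simp add: v'_def)
  have nz: "n \<noteq> 0" using assms(1) by auto
  have cn: "n * cnj n = 1" using complex_norm_square[of n] assms(1) by simp
  have "v' / (\<i> * n) = - \<i> * (v' * cnj n)" using nz cn by (simp add: field_simps)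
  then show "Im (v' / (\<i> * n)) = v \<bullet> n" using vn by (simp add: inner_complex_def)
  show "cmod (v' / (\<i> * n)) = 1" using n1 assms(1) by (simp add: norm_divide norm_mult)
qed

lemma pn_pos:
  fixes p :: complex
  assumes "0 \<le> c" "c < R" "cmod (p + complex_of_real c) = R"
  shows "p \<bullet> ((p + complex_of_real c) / complex_of_real R) > 0"
proof -
  have R0: "R > 0" using assms by simp
  have "(cmod (p + complex_of_real c))^2 = R^2" using assms(3) by simp
  then have e: "(Re p + c)^2 + (Im p)^2 = R^2" by (simp add: cmod_power2)
  have eq: "Re p * (Re p + c) + Im p * Im p = ((Re p)^2 + (Im p)^2 + R^2 - c^2)/2" using e
    by (simp add: power2_eq_square algebra_simps)
  have "c^2 < R^2" using assms by (intro power_strict_mono) auto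
  moreover have "(Re p)^2 \<ge> 0" "(Im p)^2 \<ge> 0" by simp_all
  ultimately have "(Re p)^2 + (Im p)^2 + R^2 - c^2 > 0" by linarith
  then have "Re p * (Re p + c) + Im p * Im p > 0" unfolding eq by simp
  then show ?thesis using R0 by (simp add: inner_complex_def add_divide_distrib[symmetric] Re_divide_of_real Im_divide_of_real)
qed

lemma bmap_SR:
  fixes x :: bstate and phs R :: real and q v q' n v' :: complex and t :: real
  assumes "q = base phs R x" and "v = vel x"
    and "t = Sup {t. 0 \<le> t \<and> q + complex_of_real t * v \<in> Qset phs R}"
    and "q' = q + complex_of_real t * v"
    and "n = (q' - O_R phs R) / complex_of_real R"
    and "v' = v - complex_of_real (2 * (v \<bullet> n)) * n"
  assumes "fst (bmap phs R x) \<noteq> Sr"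
  shows "q' \<notin> Gamma_r phs \<and> bmap phs R x = (SR, Arg n, Arg (v' / (\<i> * n)))"
  using assms(7) by (simp add: bmap_def Let_def assms(1-6) split: if_splits)

lemma bmap_Sr:
  fixes x :: bstate and phs R :: real and q v q' v' :: complex and t :: real
  assumes "q = base phs R x" and "v = vel x"
    and "t = Sup {t. 0 \<le> t \<and> q + complex_of_real t * v \<in> Qset phs R}"
    and "q' = q + complex_of_real t * v"
    and "v' = v - complex_of_real (2 * (v \<bullet> q')) * q'"
  assumes "fst (bmap phs R x) \<noteq> SR"
  shows "q' \<in> Gamma_r phs \<and> bmap phs R x = (Sr, ang2pi q', Arg (v' / (\<i> * q')))"
  using assms(6) by (simp add: bmap_def Let_def assms(1-5) split: if_splits)


theorem mainTheorem8:
  fixes phs R :: real and x :: bstate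
  defines "F \<equiv> bmap phs R"
  defines "n0 \<equiv> LEAST n. (F ^^ n) x \<in> Mr_out phs R"
  defines "x0 \<equiv> (F ^^ n0) x"
  defines "x1 \<equiv> F x0"
  defines "n1 \<equiv> LEAST n. (F ^^ n) x1 \<in> MR_out phs R"
  defines "x2 \<equiv> (F ^^ (n1 + 1)) x1"
  defines "d0 \<equiv> 1 * sin (theta x0)"
  defines "d2 \<equiv> 1 * sin (theta x2)"
  defines "tau0 \<equiv> cmod (base phs R x0 - base phs R x1)"
  defines "tau1 \<equiv> cmod (base phs R x1 - base phs R x2)"
  assumes "0 < phs" and "phs < pi / 2" and "1 \<le> R"
    and "x \<in> Mr phs"
    and "\<exists>n. (F ^^ n) x \<in> Mr_out phs R"
    and "\<exists>n. (F ^^ n) x1 \<in> MR_out phs R"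
    and "n1 = 0"
  shows "tau0 + tau1 > 2 * d0 \<and> tau0 + tau1 > 2 * d2 \<and> tau0 + tau1 > d0 + d2"
proof -
  note ph = assms(11,12,13)
  have R0: "R > 0" using ph by simp
  have "(F ^^ n0) x \<in> Mr_out phs R" unfolding n0_def by (rule LeastI_ex) (rule assms(15))
  then have x0o: "x0 \<in> Mr_out phs R" by (simp add: x0_def)
  have "(F ^^ n1) x1 \<in> MR_out phs R" unfolding n1_def by (rule LeastI_ex) (rule assms(16))
  then have x1o: "x1 \<in> MR_out phs R" using assms(17) by simp
  have x2e: "x2 = F x1" using assms(17) by (simp add: x2_def)
  have x0M: "x0 \<in> Mr phs" and x1M: "x1 \<in> MR phs R" using x0o by (auto simp: Mr_out_def x1_def F_def)
  have x2M: "x2 \<in> Mr phs" using x1o x2e by (auto simp: MR_out_def F_def)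
  obtain p0a th0 where x0e: "x0 = (Sr, p0a, th0)" and p0a: "phs \<le> p0a" "p0a \<le> 2*pi - phs"
    and th0: "0 < th0" "th0 < pi" using x0M by (auto simp: Mr_def)
  define p0 where "p0 = cis p0a"
  define v where "v = \<i> * cis p0a * cis th0"
  have bx0: "base phs R x0 = p0" by (simp add: x0e base_def p0_def)
  have vx0: "vel x0 = v" by (simp add: x0e vel_def v_def)
  have p0n: "cmod p0 = 1" by (simp add: p0_def)
  have vn: "cmod v = 1" by (simp add: v_def norm_mult)
  have d0e: "d0 = sin th0" by (simp add: d0_def theta_def x0e)
  have "v = \<i> * cis (p0a + th0)" by (simp add: v_def cis_mult)
  then have "p0 \<bullet> v = cos p0a * (- sin (p0a + th0)) + sin p0a * cos (p0a + th0)"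
    by (simp add: p0_def inner_complex_def)
  also have "\<dots> = sin (p0a - (p0a + th0))" by (subst sin_diff) (simp add: algebra_simps)
  finally have p0v: "p0 \<bullet> v = - d0" unfolding d0e by simp
  have p0G: "p0 \<in> Gamma_r phs" and p0Q: "p0 \<in> Qset phs R" using p0_facts[OF ph p0a] by (simp_all add: p0_def)
  define t0 where "t0 = Sup {t. 0 \<le> t \<and> p0 + complex_of_real t * v \<in> Qset phs R}"
  define p1 where "p1 = p0 + complex_of_real t0 * v"
  define n where "n = (p1 - O_R phs R) / complex_of_real R"
  define v' where "v' = v - complex_of_real (2 * (v \<bullet> n)) * n"
  have "fst (bmap phs R x0) \<noteq> Sr" using x1M by (auto simp: MR_def x1_def F_def)
  from bmap_SR[OF bx0[symmetric] vx0[symmetric] t0_def p1_def n_def v'_def this]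
  have p1G: "p1 \<notin> Gamma_r phs" and x1e: "x1 = (SR, Arg n, Arg (v' / (\<i> * n)))"
    by (auto simp: x1_def F_def)
  note ss0 = sup_step[OF ph p0Q vn, folded t0_def, folded p1_def]
  have t0: "0 \<le> t0" and p1Q: "p1 \<in> Qset phs R" and p1R: "cmod (p1 - O_R phs R) = R"
    using ss0 p1G by auto
  have nn: "cmod n = 1" using p1R R0 by (simp add: n_def norm_divide)
  note rf = refl_facts[OF nn vn, folded v'_def]
  have th1: "0 < Arg (v' / (\<i> * n))" "Arg (v' / (\<i> * n)) < pi" using x1M by (auto simp: x1e MR_def)
  have "sin (Arg (v' / (\<i> * n))) > 0" using th1 by (intro sin_gt_zero) auto
  then have vnpos: "v \<bullet> n > 0" using arg_unit(2)[OF rf(5)] rf(4) by simp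
  define c where "c = sqrt (R\<^sup>2 - (sin phs)\<^sup>2) - cos phs"
  note cf = cfacts[OF ph, folded c_def]
  have "cmod (p1 + complex_of_real c) = R" using p1R cf(1) by simp
  from pn_pos[OF cf(2) cf(3) this]
  have p1n: "p1 \<bullet> n > 0" using cf(1) by (simp add: n_def)
  have bx1: "base phs R x1 = p1"
    using arg_unit(1)[OF nn] R0 by (simp add: x1e base_def n_def)
  have vx1: "vel x1 = v'"
  proof -
    have "vel x1 = \<i> * n * (v' / (\<i> * n))"
      using arg_unit(1)[OF nn] arg_unit(1)[OF rf(5)] by (simp add: x1e vel_def)
    also have "\<dots> = v'" using nn by (auto simp: field_simps)
    finally show ?thesis .
  qed
  define s where "s = Sup {t. 0 \<le> t \<and> p1 + complex_of_real t * v' \<in> Qset phs R}"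
  define q2 where "q2 = p1 + complex_of_real s * v'"
  define w' where "w' = v' - complex_of_real (2 * (v' \<bullet> q2)) * q2"
  have "fst (bmap phs R x1) \<noteq> SR" using x2M x2e by (auto simp: Mr_def F_def)
  from bmap_Sr[OF bx1[symmetric] vx1[symmetric] s_def q2_def w'_def this]
  have q2G: "q2 \<in> Gamma_r phs" and x2e': "x2 = (Sr, ang2pi q2, Arg (w' / (\<i> * q2)))"
    by (auto simp: x2e F_def)
  have s0: "0 \<le> s" using sup_step(1)[OF ph p1Q rf(2)] by (simp add: s_def)
  have q2n: "cmod q2 = 1" using q2G by (simp add: Gamma_r_def)
  have bx2: "base phs R x2 = q2" using cis_ang2pi(1)[OF q2n] by (simp add: x2e' base_def)
  have spos: "0 < s"
  proof (rule ccontr)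
    assume "\<not> 0 < s"
    then have "s = 0" using s0 by simp
    then show False using q2G p1G by (simp add: q2_def)
  qed
  have t0pos: "0 < t0"
  proof (rule ccontr)
    assume "\<not> 0 < t0"
    then have "t0 = 0" using t0 by simp
    then show False using p0G p1G by (simp add: p1_def)
  qed
  note rf2 = refl_facts[OF q2n rf(2), folded w'_def]
  have d2e: "d2 = v' \<bullet> q2"
    using arg_unit(2)[OF rf2(5)] rf2(4) by (simp add: d2_def theta_def x2e')
  have tau0e: "tau0 = t0" using vn t0 by (simp add: tau0_def bx0 bx1 p1_def norm_mult)
  have tau1e: "tau1 = s" using rf(2) s0 by (simp add: tau1_def bx1 bx2 q2_def norm_mult)
  have A: "t0 + s > 2 * d0"
    by (rule key[OF p0n vn p0v t0 spos nn vnpos]) (use p1n q2n in \<open>simp_all add: p1_def q2_def v'_def\<close>)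
  have B: "s + t0 > 2 * d2"
  proof (rule key[of q2 "- v'" d2 s t0 n])
    show "cmod q2 = 1" "cmod (- v') = 1" "0 \<le> s" "0 < t0" "cmod n = 1"
      using q2n rf(2) s0 t0pos nn by simp_all
    show "q2 \<bullet> - v' = - d2" using d2e by (simp add: inner_commute)
    show "- v' \<bullet> n > 0" using rf(1) vnpos by simp
    have "q2 + complex_of_real s * - v' = p1" by (simp add: q2_def)
    then show "(q2 + complex_of_real s * - v') \<bullet> n > 0" using p1n by simp
    have "q2 + complex_of_real s * - v' + complex_of_real t0 * (- v' - complex_of_real (2 * (- v' \<bullet> n)) * n) = p0"
      using rf(3) by (simp add: q2_def p1_def)
    then show "cmod (q2 + complex_of_real s * - v' + complex_of_real t0 * (- v' - complex_of_real (2 * (- v' \<bullet> n)) * n)) = 1"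
      using p0n by simp
  qed
  show ?thesis using A B tau0e tau1e by simp
qed

end
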